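(* Let $G$ be a finite simple triangle-free graph without isolated vertices having a maximum open packing (a set of size $\rho_o(G)$) whose induced subgraph has all components isomorphic to $K_2$, and let $H$ be a finite bipartite graph of order at least two without isolated vertices. Then $$\gamma_{tR}(G\times H)\ge \rho_o(G)\gamma_{tR}(H).$$
   Context: An open packing of $G$ is a set $D$ of vertices with $N(u)\cap N(v)=\emptyset$ for all distinct $u,v\in D$ (open neighborhoods); $\rho_o(G)$ is the maximum size of an open packing. A total Roman dominating function on $H$ is a map $f:V(H)\to\{0,1,2\}$ such that every vertex with label 0 has a neighbor with label 2 and the subgraph induced by vertices with positive labels has no isolated vertices; $\gamma_{tR}(H)$ is the minimum of $\sum_v f(v)$ over such $f$. The direct product $G\times H$ has vertex set $V(G)\times V(H)$, with $(g,h)(g',h')$ an edge iff $gg'\in E(G)$ and $hh'\in E(H)$. *)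

theory Defs
  imports Main
begin

definition simple_graph :: "'a set \<Rightarrow> 'a set set \<Rightarrow> bool" where
  "simple_graph V E \<longleftrightarrow> finite V \<and>
     (\<forall>e\<in>E. \<exists>u v. u \<in> V \<and> v \<in> V \<and> u \<noteq> v \<and> e = {u, v})"

definition adj :: "'a set set \<Rightarrow> 'a \<Rightarrow> 'a \<Rightarrow> bool" where
  "adj E u v \<longleftrightarrow> u \<noteq> v \<and> {u, v} \<in> E"

definition nbhd :: "'a set \<Rightarrow> 'a set set \<Rightarrow> 'a \<Rightarrow> 'a set" where
  "nbhd V E u = {v \<in> V. adj E u v}"

definition no_isolated :: "'a set \<Rightarrow> 'a set set \<Rightarrow> bool" where
  "no_isolated V E \<longleftrightarrow> (\<forall>u\<in>V. \<exists>v\<in>V. adj E u v)"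

definition triangle_free :: "'a set \<Rightarrow> 'a set set \<Rightarrow> bool" where
  "triangle_free V E \<longleftrightarrow>
     \<not> (\<exists>a\<in>V. \<exists>b\<in>V. \<exists>c\<in>V. adj E a b \<and> adj E b c \<and> adj E a c)"

definition bipartite :: "'a set \<Rightarrow> 'a set set \<Rightarrow> bool" where
  "bipartite V E \<longleftrightarrow> (\<exists>A B. A \<union> B = V \<and> A \<inter> B = {} \<and>
     (\<forall>u\<in>V. \<forall>v\<in>V. adj E u v \<longrightarrow> (u \<in> A \<and> v \<in> B) \<or> (u \<in> B \<and> v \<in> A)))"

definition open_packing :: "'a set \<Rightarrow> 'a set set \<Rightarrow> 'a set \<Rightarrow> bool" where
  "open_packing V E D \<longleftrightarrow> D \<subseteq> V \<and>
     (\<forall>u\<in>D. \<forall>v\<in>D. u \<noteq> v \<longrightarrow> nbhd V E u \<inter> nbhd V E v = {})"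

definition rho_o :: "'a set \<Rightarrow> 'a set set \<Rightarrow> nat" where
  "rho_o V E = Max (card ` {D. open_packing V E D})"

text \<open>The subgraph induced by D has every component isomorphic to K2,
  i.e. every vertex of D has exactly one neighbour inside D.\<close>
definition induced_K2_components :: "'a set \<Rightarrow> 'a set set \<Rightarrow> 'a set \<Rightarrow> bool" where
  "induced_K2_components V E D \<longleftrightarrow> (\<forall>u\<in>D. \<exists>!v. v \<in> D \<and> adj E u v)"

definition trdf :: "'a set \<Rightarrow> 'a set set \<Rightarrow> ('a \<Rightarrow> nat) \<Rightarrow> bool" where
  "trdf V E f \<longleftrightarrow>
     (\<forall>v\<in>V. f v \<le> 2) \<and>
     (\<forall>v\<in>V. f v = 0 \<longrightarrow> (\<exists>u\<in>V. adj E v u \<and> f u = 2)) \<and>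
     (\<forall>v\<in>V. f v > 0 \<longrightarrow> (\<exists>u\<in>V. adj E v u \<and> f u > 0))"

definition gamma_tR :: "'a set \<Rightarrow> 'a set set \<Rightarrow> nat" where
  "gamma_tR V E = Min ((\<lambda>f. \<Sum>v\<in>V. f v) ` {f. trdf V E f})"

definition dprod_V :: "'a set \<Rightarrow> 'b set \<Rightarrow> ('a \<times> 'b) set" where
  "dprod_V VG VH = VG \<times> VH"

definition dprod_E :: "'a set set \<Rightarrow> 'b set set \<Rightarrow> ('a \<times> 'b) set set" where
  "dprod_E EG EH = {{(g, h), (g', h')} | g h g' h'. adj EG g g' \<and> adj EH h h'}"

end

theory Submission
  imports Defs
begin

lemma adj_sym: "adj E u v = adj E v u"
  unfolding adj_def by (auto simp: insert_commute)

lemma adj_dprod: "adj (dprod_E EG EH) (g,h) (g',h') \<longleftrightarrow> adj EG g g' \<and> adj EH h h'"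
proof
  assume "adj (dprod_E EG EH) (g,h) (g',h')"
  then obtain a b c d where e: "{(g,h),(g',h')} = {(a,b),(c,d)}" "adj EG a c" "adj EH b d"
    unfolding adj_def dprod_E_def by blast
  then show "adj EG g g' \<and> adj EH h h'"
    by (auto simp: doubleton_eq_iff adj_sym)
next
  assume "adj EG g g' \<and> adj EH h h'"
  then show "adj (dprod_E EG EH) (g,h) (g',h')"
    unfolding dprod_E_def by (auto simp: adj_def)
qed

lemma trdf_sum_finite:
  assumes "finite V"
  shows "finite ((\<lambda>f. \<Sum>v\<in>V. f v) ` {f. trdf V E f})"
proof (rule finite_subset[of _ "{..2 * card V}"])
  show "(\<lambda>f. \<Sum>v\<in>V. f v) ` {f. trdf V E f} \<subseteq> {..2 * card V}"
  proof
    fix s assume "s \<in> (\<lambda>f. \<Sum>v\<in>V. f v) ` {f. trdf V E f}"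
    then obtain f where f: "trdf V E f" "s = (\<Sum>v\<in>V. f v)" by blast
    have "(\<Sum>v\<in>V. f v) \<le> (\<Sum>v\<in>V. 2)"
      using f(1) unfolding trdf_def by (intro sum_mono) auto
    then show "s \<in> {..2 * card V}" using f(2) by auto
  qed
qed simp

lemma gamma_le:
  assumes "finite V" "trdf V E f"
  shows "gamma_tR V E \<le> (\<Sum>v\<in>V. f v)"
  unfolding gamma_tR_def using trdf_sum_finite[OF assms(1), of E] assms(2)
  by (intro Min_le) auto

theorem theorem2p9:
  fixes VG :: "'a set" and EG :: "'a set set" and VH :: "'b set" and EH :: "'b set set"
  assumes "simple_graph VG EG" and "triangle_free VG EG" and "no_isolated VG EG"
    and "\<exists>D. open_packing VG EG D \<and> card D = rho_o VG EG \<and> induced_K2_components VG EG D"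
    and "simple_graph VH EH" and "bipartite VH EH" and "card VH \<ge> 2" and "no_isolated VH EH"
  shows "gamma_tR (dprod_V VG VH) (dprod_E EG EH) \<ge> rho_o VG EG * gamma_tR VH EH"
proof -
  let ?P = "dprod_V VG VH" and ?EP = "dprod_E EG EH"
  have finG: "finite VG" and finH: "finite VH"
    using assms(1,5) unfolding simple_graph_def by auto
  have finP: "finite ?P" unfolding dprod_V_def using finG finH by simp
  obtain D where D: "open_packing VG EG D" "card D = rho_o VG EG" "induced_K2_components VG EG D"
    using assms(4) by blast
  have DV: "D \<subseteq> VG" using D(1) unfolding open_packing_def by auto
  have finD: "finite D" using DV finG finite_subset by blast
  obtain A B where AB: "A \<union> B = VH" "A \<inter> B = {}"
    "\<And>u v. u\<in>VH \<Longrightarrow> v\<in>VH \<Longrightarrow> adj EH u v \<Longrightarrow> (u \<in> A \<and> v \<in> B) \<or> (u \<in> B \<and> v \<in> A)"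
    using assms(6) unfolding bipartite_def by blast
  define p where "p u = (THE v. v \<in> D \<and> adj EG u v)" for u
  have p1: "p u \<in> D \<and> adj EG u (p u)" if "u \<in> D" for u
    unfolding p_def using D(3) that unfolding induced_K2_components_def
    by (metis (no_types, lifting) theI)
  have p2: "p (p u) = u" if "u \<in> D" for u
  proof -
    have "p u \<in> D" "adj EG (p u) u" using p1[OF that] adj_sym by metis+
    moreover have "\<exists>!v. v \<in> D \<and> adj EG (p u) v" using D(3) \<open>p u \<in> D\<close>
      unfolding induced_K2_components_def by blast
    ultimately show ?thesis using p1[OF \<open>p u \<in> D\<close>] that by blast
  qed
  have bij: "bij_betw p D D"
    by (rule bij_betw_byWitness[of D p p D]) (use p1 p2 in auto)
  have "trdf ?P ?EP (\<lambda>_. 2)"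
  proof -
    have "\<exists>w\<in>?P. adj ?EP z w" if zP: "z \<in> ?P" for z
    proof -
      obtain y h where z: "z = (y,h)" "y \<in> VG" "h \<in> VH" using zP unfolding dprod_V_def by (cases z) auto
      obtain y' where "y' \<in> VG" "adj EG y y'" using assms(3) z unfolding no_isolated_def by blast
      moreover obtain h' where "h' \<in> VH" "adj EH h h'" using assms(8) z unfolding no_isolated_def by blast
      ultimately show ?thesis using z by (intro bexI[of _ "(y',h')"]) (auto simp: adj_dprod dprod_V_def)
    qed
    then show ?thesis unfolding trdf_def by auto
  qed
  then have ne: "(\<lambda>f. \<Sum>v\<in>?P. f v) ` {f. trdf ?P ?EP f} \<noteq> {}" by blast
  obtain f where f: "trdf ?P ?EP f" "gamma_tR ?P ?EP = (\<Sum>v\<in>?P. f v)"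
    using Min_in[OF trdf_sum_finite[OF finP] ne] unfolding gamma_tR_def by auto
  have tr0: "\<And>v. v \<in> ?P \<Longrightarrow> f v = 0 \<Longrightarrow> \<exists>u\<in>?P. adj ?EP v u \<and> f u = 2"
    and tr1: "\<And>v. v \<in> ?P \<Longrightarrow> f v > 0 \<Longrightarrow> \<exists>u\<in>?P. adj ?EP v u \<and> f u > 0"
    using f(1) unfolding trdf_def by blast+
  have fpos: "\<exists>y' h'. y' \<in> VG \<and> h' \<in> VH \<and> adj EG y y' \<and> adj EH h h' \<and> f (y',h') > 0
           \<and> (f (y,h) = 0 \<longrightarrow> f (y',h') = 2)"
    if yh: "y \<in> VG" "h \<in> VH" for y h
  proof -
    have inP: "(y,h) \<in> ?P" using yh unfolding dprod_V_def by simp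
    show ?thesis
    proof (cases "f (y,h) = 0")
      case True
      from tr0[OF inP True] obtain w where w: "w \<in> ?P" "adj ?EP (y,h) w" "f w = 2" by blast
      obtain y' h' where "w = (y',h')" by (cases w)
      with w have "y' \<in> VG \<and> h' \<in> VH \<and> adj EG y y' \<and> adj EH h h' \<and> f (y',h') = 2"
        by (auto simp: adj_dprod dprod_V_def)
      then show ?thesis by (intro exI[of _ y'] exI[of _ h']) simp
    next
      case False
      then have "f (y,h) > 0" by simp
      from tr1[OF inP this] obtain w where w: "w \<in> ?P" "adj ?EP (y,h) w" "f w > 0" by blast
      obtain y' h' where "w = (y',h')" by (cases w)
      with w have "y' \<in> VG \<and> h' \<in> VH \<and> adj EG y y' \<and> adj EH h h' \<and> f (y',h') > 0"
        by (auto simp: adj_dprod dprod_V_def)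
      then show ?thesis using False by (intro exI[of _ y'] exI[of _ h']) simp
    qed
  qed
  have fle2: "f (y,h) \<le> 2" if "y \<in> VG" "h \<in> VH" for y h
    using f(1) that unfolding trdf_def dprod_V_def by blast
  define N where "N x = nbhd VG EG x" for x
  have finN: "finite (N x)" for x unfolding N_def nbhd_def using finG by simp
  define S where "S x h = (\<Sum>y\<in>N x. f (y,h))" for x h
  define xu where "xu u h = (if h \<in> A then u else p u)" for u h
  define g where "g u h = min 2 (S (xu u h) h)" for u h
  have xuD: "xu u h \<in> D" if "u \<in> D" for u h using p1 that unfolding xu_def by auto
  have xuadj: "xu u h' = p (xu u h)" if "u \<in> D" "h \<in> VH" "h' \<in> VH" "adj EH h h'" for u h h'
    using AB(2) AB(3)[OF that(2-4)] p2[OF that(1)] unfolding xu_def by auto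
  have gtrdf: "trdf VH EH (g u)" if u: "u \<in> D" for u
  proof -
    have main: "\<exists>h'\<in>VH. adj EH h h' \<and> g u h' > 0 \<and> (g u h = 0 \<longrightarrow> g u h' = 2)"
      if h: "h \<in> VH" for h
    proof -
      let ?x = "xu u h"
      have x: "?x \<in> D" "p ?x \<in> D" "adj EG ?x (p ?x)" using xuD[OF u] p1 by auto
      then have pxV: "p ?x \<in> VG" using DV by auto
      obtain y' h' where yh: "y' \<in> VG" "h' \<in> VH" "adj EG (p ?x) y'" "adj EH h h'" "f (y',h') > 0"
        "f (p ?x, h) = 0 \<longrightarrow> f (y',h') = 2"
        using fpos[OF pxV h] by (elim exE conjE) (rule that; assumption)
      have y'N: "y' \<in> N (p ?x)" unfolding N_def nbhd_def using yh by auto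
      have xh': "xu u h' = p ?x" using xuadj[OF u h yh(2) yh(4)] .
      have Sge: "S (p ?x) h' \<ge> f (y',h')" unfolding S_def
        using member_le_sum[OF y'N, of "\<lambda>y. f (y,h')"] finN by simp
      have pxN: "p ?x \<in> N ?x" unfolding N_def nbhd_def using x pxV by auto
      have "g u h = 0 \<longrightarrow> f (p ?x, h) = 0"
        unfolding g_def S_def using pxN finN[of ?x] by (auto simp: sum_eq_0_iff min_def split: if_splits)
      then show ?thesis using yh Sge xh' unfolding g_def by auto
    qed
    show ?thesis unfolding trdf_def
      using main by (auto simp: g_def)
  qed
  have step1: "card D * gamma_tR VH EH \<le> (\<Sum>u\<in>D. \<Sum>h\<in>VH. g u h)"
  proof -
    have "(\<Sum>u\<in>D. gamma_tR VH EH) \<le> (\<Sum>u\<in>D. \<Sum>h\<in>VH. g u h)"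
      by (rule sum_mono) (use gamma_le[OF finH gtrdf] in auto)
    then show ?thesis by simp
  qed
  have AV: "A \<subseteq> VH" "B \<subseteq> VH" using AB(1) by auto
  have finA: "finite A" "finite B" using AV finH finite_subset by auto
  have step2: "(\<Sum>h\<in>VH. g u h) \<le> (\<Sum>h\<in>A. S u h) + (\<Sum>h\<in>B. S (p u) h)" for u
  proof -
    have "(\<Sum>h\<in>VH. g u h) = (\<Sum>h\<in>A. g u h) + (\<Sum>h\<in>B. g u h)"
      using AB(1,2) finA sum.union_disjoint by metis
    also have "\<dots> \<le> (\<Sum>h\<in>A. S u h) + (\<Sum>h\<in>B. S (p u) h)"
      using AB(2) by (intro add_mono sum_mono) (auto simp: g_def xu_def)
    finally show ?thesis .
  qed
  have step3: "(\<Sum>u\<in>D. \<Sum>h\<in>B. S (p u) h) = (\<Sum>u\<in>D. \<Sum>h\<in>B. S u h)"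
    using sum.reindex_bij_betw[OF bij, of "\<lambda>u. \<Sum>h\<in>B. S u h"] by simp
  have step4: "(\<Sum>u\<in>D. \<Sum>h\<in>VH. g u h) \<le> (\<Sum>u\<in>D. \<Sum>h\<in>VH. S u h)"
  proof -
    have "(\<Sum>u\<in>D. \<Sum>h\<in>VH. g u h) \<le> (\<Sum>u\<in>D. (\<Sum>h\<in>A. S u h) + (\<Sum>h\<in>B. S (p u) h))"
      by (rule sum_mono) (rule step2)
    also have "\<dots> = (\<Sum>u\<in>D. (\<Sum>h\<in>A. S u h) + (\<Sum>h\<in>B. S u h))"
      using step3 by (simp add: sum.distrib)
    also have "\<dots> = (\<Sum>u\<in>D. \<Sum>h\<in>VH. S u h)"
      using AB(1,2) finA by (intro sum.cong refl) (metis sum.union_disjoint)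
    finally show ?thesis .
  qed
  have step5: "(\<Sum>u\<in>D. \<Sum>h\<in>VH. S u h) \<le> (\<Sum>v\<in>?P. f v)"
  proof -
    have "(\<Sum>u\<in>D. \<Sum>h\<in>VH. S u h) = (\<Sum>u\<in>D. \<Sum>y\<in>N u. \<Sum>h\<in>VH. f (y,h))"
      unfolding S_def by (intro sum.cong refl) (rule sum.swap)
    also have "\<dots> = (\<Sum>y\<in>(\<Union>u\<in>D. N u). \<Sum>h\<in>VH. f (y,h))"
      using D(1) finD finN unfolding open_packing_def N_def
      by (intro sum.UNION_disjoint[symmetric]) auto
    also have "\<dots> \<le> (\<Sum>y\<in>VG. \<Sum>h\<in>VH. f (y,h))"
      using finG by (intro sum_mono2) (auto simp: N_def nbhd_def)
    also have "\<dots> = (\<Sum>v\<in>?P. f v)"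
      unfolding dprod_V_def by (simp add: sum.cartesian_product)
    finally show ?thesis .
  qed
  show ?thesis using step1 step4 step5 f(2) D(2) by simp
qed

end
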